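(* Let $\ell$ be a positive integer, let $G$ be a graph, let $P$ be a path in $G$ with endvertices $u,v$, and let $(Q_1,\ldots,Q_r)$ be a tuple of $P$-paths in $G$, where $u_i,v_i$ denote the endvertices of $Q_i$ with $u_i<_Pv_i$, such that: (E1$'$) if $|i-j|>1$ then $Q_i$ and $Q_j$ are internally disjoint; (E2) the cycle $u_iPv_i\cup Q_i$ is short for every $i$; (E3) $u_1=u$ and $v_r=v$; (E4) $u_i<_Pu_{i+1}<_Pv_i<_Pv_{i+1}$ for $i=1,\ldots,r-1$. If every long cycle in $G$ has length at least $2\ell$, then there is a short path between $u$ and $v$ that is contained in $P\cup\bigcup_{j=1}^{r}Q_j$.
   Context: A path or cycle is short if its length (number of edges) is less than $\ell$; a cycle is long if its length is at least $\ell$. For a path $P$ with endvertices $u,v$, $\le_P$ denotes the total order on $V(P)$ given by distance from $u$ along $P$, and $xPy$ denotes the subpath of $P$ between $x,y\in V(P)$. For a subgraph $H$, an $H$-path is a path with two distinct endvertices in $H$ that is internally disjoint from $H$; a path of length $1$ between two vertices of $H$ is an $H$-path only if its edge is not in $E(H)$. *)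

theory Defs
  imports Main
begin

definition graph :: "'a set \<Rightarrow> 'a set set \<Rightarrow> bool" where
  "graph V E \<longleftrightarrow> (\<forall>e\<in>E. e \<subseteq> V \<and> card e = 2)"

definition is_path :: "'a set \<Rightarrow> 'a set set \<Rightarrow> 'a list \<Rightarrow> bool" where
  "is_path V E xs \<longleftrightarrow> xs \<noteq> [] \<and> distinct xs \<and> set xs \<subseteq> V \<and>
     (\<forall>i. Suc i < length xs \<longrightarrow> {xs ! i, xs ! Suc i} \<in> E)"

definition path_edges :: "'a list \<Rightarrow> 'a set set" where
  "path_edges xs = {{xs ! i, xs ! Suc i} | i. Suc i < length xs}"

definition plen :: "'a list \<Rightarrow> nat" where
  "plen xs = length xs - 1"

definition inner :: "'a list \<Rightarrow> 'a set" where
  "inner xs = set (butlast (tl xs))"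

text \<open>Cycles: lists of at least 3 distinct vertices, consecutive ones (cyclically) adjacent;
  the length of the cycle is the number of its vertices (= number of edges).\<close>
definition is_cycle :: "'a set \<Rightarrow> 'a set set \<Rightarrow> 'a list \<Rightarrow> bool" where
  "is_cycle V E xs \<longleftrightarrow> 3 \<le> length xs \<and> distinct xs \<and> set xs \<subseteq> V \<and>
     (\<forall>i. Suc i < length xs \<longrightarrow> {xs ! i, xs ! Suc i} \<in> E) \<and> {last xs, hd xs} \<in> E"

definition is_Hpath :: "'a set \<Rightarrow> 'a set set \<Rightarrow> 'a set \<Rightarrow> 'a set set \<Rightarrow> 'a list \<Rightarrow> bool" where
  "is_Hpath V E VH EH xs \<longleftrightarrow> is_path V E xs \<and> 2 \<le> length xs \<and>
     hd xs \<in> VH \<and> last xs \<in> VH \<and> hd xs \<noteq> last xs \<and> inner xs \<inter> VH = {} \<and>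
     (length xs = 2 \<longrightarrow> {hd xs, last xs} \<notin> EH)"

definition pos :: "'a list \<Rightarrow> 'a \<Rightarrow> nat" where
  "pos P x = (LEAST i. i < length P \<and> P ! i = x)"

definition lessP :: "'a list \<Rightarrow> 'a \<Rightarrow> 'a \<Rightarrow> bool" where
  "lessP P x y \<longleftrightarrow> pos P x < pos P y"

definition firstP :: "'a list \<Rightarrow> 'a list \<Rightarrow> 'a" where
  "firstP P Q = (if lessP P (hd Q) (last Q) then hd Q else last Q)"

definition secondP :: "'a list \<Rightarrow> 'a list \<Rightarrow> 'a" where
  "secondP P Q = (if lessP P (hd Q) (last Q) then last Q else hd Q)"

definition int_disjoint :: "'a list \<Rightarrow> 'a list \<Rightarrow> bool" where
  "int_disjoint Q R \<longleftrightarrow> inner Q \<inter> set R = {} \<and> inner R \<inter> set Q = {}"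

end

theory Submission
  imports Defs
begin


fun pe :: "'a list \<Rightarrow> 'a set set" where
  "pe [] = {}" | "pe [x] = {}" | "pe (x#y#xs) = insert {x,y} (pe (y#xs))"

lemma path_edges_pe: "path_edges xs = pe xs"
proof (induction xs rule: pe.induct)
  case 1 then show ?case by (simp add: path_edges_def)
next
  case (2 x) then show ?case by (simp add: path_edges_def)
next
  case (3 x y xs)
  have "path_edges (x#y#xs) = insert {x,y} (path_edges (y#xs))"
    unfolding path_edges_def
    apply (rule set_eqI, rule iffI)
     apply (clarsimp, case_tac i; force)
    apply (erule insertE)
     apply (simp, rule_tac x=0 in exI, simp)
    apply clarsimp
    apply (rule_tac x="Suc i" in exI, simp)
    done
  then show ?case using 3 by simp
qed

lemma pe_sub_iff: "pe xs \<subseteq> E \<longleftrightarrow> (\<forall>i. Suc i < length xs \<longrightarrow> {xs ! i, xs ! Suc i} \<in> E)"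
  unfolding path_edges_pe[symmetric] path_edges_def by blast

lemma is_path_iff: "is_path V E xs \<longleftrightarrow> xs \<noteq> [] \<and> distinct xs \<and> set xs \<subseteq> V \<and> pe xs \<subseteq> E"
  unfolding is_path_def pe_sub_iff by blast

lemma is_cycle_iff: "is_cycle V E xs \<longleftrightarrow> 3 \<le> length xs \<and> distinct xs \<and> set xs \<subseteq> V \<and> pe xs \<subseteq> E \<and> {last xs, hd xs} \<in> E"
  unfolding is_cycle_def pe_sub_iff by blast

lemma pe_append: "pe (xs @ ys) = pe xs \<union> pe ys \<union> (if xs \<noteq> [] \<and> ys \<noteq> [] then {{last xs, hd ys}} else {})"
proof (induction xs rule: pe.induct)
  case 1 then show ?case by simp
next
  case (2 x) then show ?case by (cases ys rule: pe.cases) auto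
next
  case (3 x y xs) then show ?case by auto
qed

lemma pe_Cons: "pe (x # xs) = pe xs \<union> (if xs \<noteq> [] then {{x, hd xs}} else {})"
  by (cases xs) auto

lemma pe_rev: "pe (rev xs) = pe xs"
proof (induction xs)
  case Nil then show ?case by simp
next
  case (Cons x xs) then show ?case
    by (auto simp: pe_append pe_Cons last_rev insert_commute)
qed

lemma pe_append_sub1: "pe xs \<subseteq> pe (xs @ ys)"
  by (simp only: pe_append) blast

lemma pe_append_sub2: "pe ys \<subseteq> pe (xs @ ys)"
  by (simp only: pe_append) blast

lemma pe_take: "pe (take n xs) \<subseteq> pe xs"
  by (metis append_take_drop_id pe_append_sub1)

lemma pe_drop: "pe (drop n xs) \<subseteq> pe xs"
  by (metis append_take_drop_id pe_append_sub2)

lemma pe_butlast: "pe (butlast xs) \<subseteq> pe xs"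
  by (metis butlast_conv_take pe_take)

lemma plen_simp: "plen xs = length xs - 1" by (simp add: plen_def)

lemma two_le_length: "xs \<noteq> [] \<Longrightarrow> hd xs \<noteq> last xs \<Longrightarrow> 2 \<le> length xs"
  by (cases xs) (auto split: if_splits simp: Suc_le_eq)

lemma glue:
  assumes A: "is_path V E A" and B: "is_path V E B" and hA: "hd A = a" and lA: "last A = b"
    and hB: "hd B = b" and lB: "last B = a"
    and int: "set A \<inter> set B = {a,b}" and ab: "a \<noteq> b" and three: "3 \<le> plen A + plen B"
  shows "is_cycle V E (butlast A @ butlast B) \<and> length (butlast A @ butlast B) = plen A + plen B
     \<and> set (butlast A @ butlast B) = set A \<union> set B
     \<and> insert {last (butlast A @ butlast B), hd (butlast A @ butlast B)} (pe (butlast A @ butlast B)) \<subseteq> pe A \<union> pe B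
     \<and> hd (butlast A @ butlast B) = a"
proof -
  have An: "A \<noteq> []" and Bn: "B \<noteq> []" using A B by (auto simp: is_path_iff)
  have "2 \<le> length A" using An hA lA ab two_le_length by metis
  have "2 \<le> length B" using Bn hB lB ab two_le_length by metis
  define A1 where "A1 = butlast A"
  define B1 where "B1 = butlast B"
  have A1e: "A = A1 @ [b]" using An lA unfolding A1_def by (metis append_butlast_last_id)
  have B1e: "B = B1 @ [a]" using Bn lB unfolding B1_def by (metis append_butlast_last_id)
  have A1n: "A1 \<noteq> []" using \<open>2 \<le> length A\<close> A1e by auto
  have B1n: "B1 \<noteq> []" using \<open>2 \<le> length B\<close> B1e by auto
  have hA1: "hd A1 = a" using hA A1e A1n by simp
  have hB1: "hd B1 = b" using hB B1e B1n by simp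
  have dA: "distinct A" and dB: "distinct B" using A B by (auto simp: is_path_iff)
  have dA1: "distinct A1" "b \<notin> set A1" using dA A1e by auto
  have dB1: "distinct B1" "a \<notin> set B1" using dB B1e by auto
  have disj: "set A1 \<inter> set B1 = {}"
  proof (rule ccontr)
    assume "set A1 \<inter> set B1 \<noteq> {}"
    then obtain z where "z \<in> set A1" "z \<in> set B1" by blast
    then have "z \<in> set A \<inter> set B" using A1e B1e by auto
    then have "z = a \<or> z = b" using int by auto
    then show False using dA1 dB1 \<open>z \<in> set A1\<close> \<open>z \<in> set B1\<close> by auto
  qed
  have peA: "pe A = pe A1 \<union> {{last A1, b}}" using A1e A1n by (simp add: pe_append)
  have peB: "pe B = pe B1 \<union> {{last B1, a}}" using B1e B1n by (simp add: pe_append)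
  have pe12: "pe (A1 @ B1) = pe A1 \<union> pe B1 \<union> {{last A1, b}}" using A1n B1n hB1 by (simp add: pe_append)
  have E1: "pe A \<subseteq> E" "pe B \<subseteq> E" using A B by (auto simp: is_path_iff)
  have sub: "insert {last (A1 @ B1), hd (A1 @ B1)} (pe (A1 @ B1)) \<subseteq> pe A \<union> pe B"
    using pe12 peA peB A1n B1n hA1 by auto
  have "is_cycle V E (A1 @ B1)"
    unfolding is_cycle_iff
  proof (intro conjI)
    show "3 \<le> length (A1 @ B1)" using three A1e B1e by (simp add: plen_def)
    show "distinct (A1 @ B1)" using dA1 dB1 disj by simp
    show "set (A1 @ B1) \<subseteq> V" using A B A1e B1e by (auto simp: is_path_iff)
    show "pe (A1 @ B1) \<subseteq> E" using sub E1 by blast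
    show "{last (A1 @ B1), hd (A1 @ B1)} \<in> E" using sub E1 by blast
  qed
  moreover have "length (A1 @ B1) = plen A + plen B" using A1e B1e by (simp add: plen_def)
  moreover have "set (A1 @ B1) = set A \<union> set B"
  proof -
    have "a \<in> set A1" using hA1 A1n by (metis list.set_sel(1))
    moreover have "b \<in> set B1" using hB1 B1n by (metis list.set_sel(1))
    ultimately show ?thesis using A1e B1e by auto
  qed
  moreover have "hd (A1 @ B1) = a" using A1n hA1 by simp
  ultimately show ?thesis using sub unfolding A1_def B1_def by blast
qed

lemma cyc_split_ij:
  assumes C: "is_cycle V E M" and ij: "i < j" "j < length M"
  shows "\<exists>X Y. is_path V E X \<and> is_path V E Y \<and> hd X = M!i \<and> last X = hd M \<and> hd Y = M!j
     \<and> last Y = hd M \<and> set X \<inter> set Y = {hd M} \<and> M!1 \<in> set X \<union> set Y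
     \<and> plen X + plen Y < length M \<and> set X \<union> set Y \<subseteq> set M
     \<and> pe X \<union> pe Y \<subseteq> insert {last M, hd M} (pe M)"
proof -
  have M3: "3 \<le> length M" and dM: "distinct M" and VM: "set M \<subseteq> V" and EM: "pe M \<subseteq> E"
    and cl: "{last M, hd M} \<in> E" using C by (auto simp: is_cycle_iff)
  have Mn: "M \<noteq> []" using M3 by auto
  have hdM: "hd M = M!0" using Mn by (simp add: hd_conv_nth)
  have tk: "is_path V E (rev (take n M))" if "0 < n" for n
    using that Mn dM VM EM pe_take[of n M] set_take_subset[of n M]
    by (auto simp: is_path_iff pe_rev)
  show ?thesis
  proof (cases "i = 0")
    case True
    define X where "X = [M!0]"
    define Y where "Y = rev (take (Suc j) M)"
    have "is_path V E X" unfolding X_def is_path_iff using VM Mn by auto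
    moreover have "is_path V E Y" unfolding Y_def using tk by simp
    moreover have "hd Y = M!j" unfolding Y_def using ij by (simp add: hd_rev take_Suc_conv_app_nth)
    moreover have "last Y = hd M" unfolding Y_def using ij hdM by (simp add: last_rev)
    moreover have "set Y = set (take (Suc j) M)" unfolding Y_def by simp
    moreover have "M!0 \<in> set (take (Suc j) M)"
      using ij by (auto simp: in_set_conv_nth intro!: exI[of _ 0])
    moreover have "M!1 \<in> set (take (Suc j) M)"
      using ij by (auto simp: in_set_conv_nth intro!: exI[of _ 1])
    moreover have "plen X + plen Y < length M" unfolding X_def Y_def plen_def using ij by simp
    moreover have "set X \<union> set Y \<subseteq> set M" unfolding X_def Y_def using Mn
      by (auto dest: in_set_takeD)
    moreover have "pe X \<union> pe Y \<subseteq> insert {last M, hd M} (pe M)" unfolding X_def Y_def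
      using pe_take[of "Suc j" M] by (auto simp: pe_rev)
    ultimately show ?thesis using True hdM by (intro exI[of _ X] exI[of _ Y]) (auto simp: X_def)
  next
    case False
    define X where "X = rev (take (Suc i) M)"
    define Y where "Y = drop j M @ [hd M]"
    have disj: "set (take j M) \<inter> set (drop j M) = {}"
      using dM by (metis append_take_drop_id distinct_append)
    have h0: "hd M \<in> set (take j M)" using ij hdM by (auto simp: in_set_conv_nth intro!: exI[of _ 0])
    have sub: "set (take (Suc i) M) \<subseteq> set (take j M)"
      using ij by (metis Suc_leI set_take_subset_set_take)
    have dn: "drop j M \<noteq> []" using ij by simp
    have ldrop: "last (drop j M) = last M" using ij by simp
    have peY: "pe Y = pe (drop j M) \<union> {{last M, hd M}}" unfolding Y_def using dn ldrop
      by (simp add: pe_append)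
    have "is_path V E X" unfolding X_def using tk by simp
    moreover have "is_path V E Y" unfolding is_path_iff
    proof (intro conjI)
      show "Y \<noteq> []" unfolding Y_def by simp
      show "distinct Y" unfolding Y_def using dM h0 disj by auto
      show "set Y \<subseteq> V" unfolding Y_def using VM Mn by (auto dest: in_set_dropD)
      show "pe Y \<subseteq> E" using peY pe_drop[of j M] EM cl by auto
    qed
    moreover have "hd X = M!i" unfolding X_def using ij by (simp add: hd_rev take_Suc_conv_app_nth)
    moreover have "last X = hd M" unfolding X_def using ij hdM by (simp add: last_rev)
    moreover have "hd Y = M!j" unfolding Y_def using ij by (simp add: hd_drop_conv_nth)
    moreover have "last Y = hd M" unfolding Y_def by simp
    moreover have "set X \<inter> set Y = {hd M}"
    proof -
      have "hd M \<in> set X" unfolding X_def using hdM ij by (auto simp: in_set_conv_nth intro!: exI[of _ 0])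
      moreover have "set X \<inter> set (drop j M) = {}" unfolding X_def using sub disj by auto
      ultimately show ?thesis unfolding Y_def by auto
    qed
    moreover have "M!1 \<in> set X" unfolding X_def using False ij
      by (auto simp: in_set_conv_nth intro!: exI[of _ 1])
    moreover have "plen X + plen Y < length M" unfolding X_def Y_def plen_def using ij False by simp
    moreover have "set X \<union> set Y \<subseteq> set M" unfolding X_def Y_def using Mn
      by (auto dest: in_set_takeD in_set_dropD)
    moreover have "pe X \<union> pe Y \<subseteq> insert {last M, hd M} (pe M)" unfolding X_def
      using pe_take[of "Suc i" M] peY pe_drop[of j M] by (auto simp: pe_rev)
    ultimately show ?thesis by (intro exI[of _ X] exI[of _ Y]) auto
  qed
qed

lemma cyc_split:
  assumes C: "is_cycle V E M" and xy: "x \<in> set M" "y \<in> set M" "x \<noteq> y"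
  shows "\<exists>X Y. is_path V E X \<and> is_path V E Y \<and> hd X = x \<and> last X = hd M \<and> hd Y = y
     \<and> last Y = hd M \<and> set X \<inter> set Y = {hd M} \<and> M!1 \<in> set X \<union> set Y
     \<and> plen X + plen Y < length M \<and> set X \<union> set Y \<subseteq> set M
     \<and> pe X \<union> pe Y \<subseteq> insert {last M, hd M} (pe M)"
proof -
  obtain i where i: "i < length M" "M!i = x" using xy by (auto simp: in_set_conv_nth)
  obtain j where j: "j < length M" "M!j = y" using xy by (auto simp: in_set_conv_nth)
  have "i \<noteq> j" using i j xy by auto
  then consider "i < j" | "j < i" by linarith
  then show ?thesis
  proof cases
    case 1 then show ?thesis using cyc_split_ij[OF C 1 j(1)] i j by simp
  next
    case 2
    from cyc_split_ij[OF C 2 i(1)] obtain X Y where "is_path V E X \<and> is_path V E Y \<and> hd X = M!j \<and> last X = hd M \<and> hd Y = M!i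
     \<and> last Y = hd M \<and> set X \<inter> set Y = {hd M} \<and> M!1 \<in> set X \<union> set Y
     \<and> plen X + plen Y < length M \<and> set X \<union> set Y \<subseteq> set M
     \<and> pe X \<union> pe Y \<subseteq> insert {last M, hd M} (pe M)" by blast
    then show ?thesis using i j by (intro exI[of _ Y] exI[of _ X]) auto
  qed
qed



lemma pos_nth: assumes "distinct P" "i < length P" shows "pos P (P!i) = i"
  unfolding pos_def
proof (rule Least_equality)
  show "i < length P \<and> P!i = P!i" using assms by simp
  fix y assume "y < length P \<and> P!y = P!i"
  then show "i \<le> y" using assms nth_eq_iff_index_eq[of P y i] by simp
qed

lemma pos_in: "x \<in> set P \<Longrightarrow> pos P x < length P \<and> P ! pos P x = x"
proof -
  assume "x \<in> set P"
  then have "\<exists>i. i < length P \<and> P!i = x" by (auto simp: in_set_conv_nth)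
  then show ?thesis unfolding pos_def by (rule LeastI_ex)
qed

lemma pos_inj: "x \<in> set P \<Longrightarrow> y \<in> set P \<Longrightarrow> pos P x = pos P y \<Longrightarrow> x = y"
proof -
  assume a: "x \<in> set P" "y \<in> set P" "pos P x = pos P y"
  have "x = P ! pos P x" using pos_in[OF a(1)] by simp
  also have "\<dots> = P ! pos P y" using a(3) by simp
  also have "\<dots> = y" using pos_in[OF a(2)] by simp
  finally show "x = y" .
qed

definition seg :: "'a list \<Rightarrow> nat \<Rightarrow> nat \<Rightarrow> 'a list" where
  "seg P a b = drop a (take (Suc b) P)"

lemma seg_props:
  assumes P: "is_path V E P" and ab: "a \<le> b" "b < length P"
  shows "is_path V E (seg P a b) \<and> hd (seg P a b) = P!a \<and> last (seg P a b) = P!b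
    \<and> length (seg P a b) = Suc b - a \<and> (\<forall>z. z \<in> set (seg P a b) \<longleftrightarrow> (\<exists>k. a \<le> k \<and> k \<le> b \<and> z = P!k))
    \<and> pe (seg P a b) \<subseteq> pe P \<and> (a < b \<longrightarrow> rev (seg P a b) ! 1 = P!(b - 1))"
proof -
  have dP: "distinct P" and VP: "set P \<subseteq> V" and EP: "pe P \<subseteq> E" using P by (auto simp: is_path_iff)
  have len: "length (seg P a b) = Suc b - a" unfolding seg_def using ab by simp
  have nth: "\<And>m. m < Suc b - a \<Longrightarrow> seg P a b ! m = P!(a+m)" unfolding seg_def using ab by simp
  have mem: "\<forall>z. z \<in> set (seg P a b) \<longleftrightarrow> (\<exists>k. a \<le> k \<and> k \<le> b \<and> z = P!k)"
  proof (intro allI iffI)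
    fix z assume "z \<in> set (seg P a b)"
    then obtain m where "m < Suc b - a" "z = seg P a b ! m" using len by (auto simp: in_set_conv_nth)
    then show "\<exists>k. a \<le> k \<and> k \<le> b \<and> z = P!k" using nth by (intro exI[of _ "a+m"]) auto
  next
    fix z assume "\<exists>k. a \<le> k \<and> k \<le> b \<and> z = P!k"
    then obtain k where "a \<le> k" "k \<le> b" "z = P!k" by blast
    then have "k - a < Suc b - a" by linarith
    then have "seg P a b ! (k - a) \<in> set (seg P a b)" using len by (simp add: nth_mem)
    then show "z \<in> set (seg P a b)" using nth[of "k-a"] \<open>k - a < Suc b - a\<close> \<open>a \<le> k\<close> \<open>z = P!k\<close> by simp
  qed
  have pe: "pe (seg P a b) \<subseteq> pe P" unfolding seg_def using pe_drop pe_take by (metis subset_trans)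
  have ne: "seg P a b \<noteq> []" using len ab by auto
  have "set (seg P a b) \<subseteq> set P" unfolding seg_def
    by (meson set_drop_subset set_take_subset subset_trans)
  then have "is_path V E (seg P a b)" unfolding is_path_iff using ne pe EP dP VP
    by (auto simp: seg_def)
  moreover have "hd (seg P a b) = P!a" using nth[of 0] ne ab by (simp add: hd_conv_nth)
  moreover have "last (seg P a b) = P!b" using nth[of "b - a"] ne ab len by (simp add: last_conv_nth)
  moreover have "a < b \<longrightarrow> rev (seg P a b) ! 1 = P!(b - 1)"
    using nth[of "b - a - 1"] len ab by (auto simp: rev_nth)
  ultimately show ?thesis using len mem pe by blast
qed

lemma set_len2': assumes "2 \<le> length xs" shows "set xs = insert (hd xs) (insert (last xs) (set (butlast (tl xs))))"
proof (cases xs)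
  case Nil then show ?thesis using assms by simp
next
  case (Cons a ys)
  have "ys \<noteq> []" using Cons assms by auto
  then have "set ys = insert (last ys) (set (butlast ys))"
    by (induct ys rule: rev_induct) auto
  then show ?thesis using Cons \<open>ys \<noteq> []\<close> by auto
qed

lemma butlast_app_nth1:
  assumes "2 \<le> length A" "2 \<le> length B" "hd B = last A"
  shows "(butlast A @ butlast B) ! 1 = A ! 1"
proof (cases "length A = 2")
  case True
  then have "butlast A = [A!0]" by (cases A; cases "tl A") auto
  moreover have "butlast B ! 0 = hd B" using assms(2) by (cases B; cases "tl B") auto
  moreover have "last A = A!1" using True by (cases A; cases "tl A"; auto)
  ultimately show ?thesis using assms by simp
next
  case False
  then have "1 < length A - 1" using assms(1) by linarith
  then show ?thesis using assms by (simp add: nth_append nth_butlast)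
qed



lemma first_hit:
  assumes "last A \<in> T" "A \<noteq> []"
  shows "\<exists>i < length A. A!i \<in> T \<and> (\<forall>k<i. A!k \<notin> T)"
proof -
  have "\<exists>k. k < length A \<and> A!k \<in> T" using assms last_conv_nth[of A]
    by (metis diff_less length_greater_0_conv zero_less_one)
  then obtain i where "(i < length A \<and> A!i \<in> T) \<and> (\<forall>m<i. \<not> (m < length A \<and> A!m \<in> T))"
    using exists_least_iff[of "\<lambda>k. k < length A \<and> A!k \<in> T"] by blast
  then show ?thesis by (meson order.strict_trans)
qed

lemma prefix_join:
  assumes A: "is_path V E A" and i: "0 < i" "i < length A" and X: "is_path V E X" and hX: "hd X = A!i"
    and dj: "set (take i A) \<inter> set X = {}"
  shows "is_path V E (take i A @ X) \<and> pe (take i A @ X) \<subseteq> pe A \<union> pe X \<and> hd (take i A @ X) = hd A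
    \<and> last (take i A @ X) = last X \<and> set (take i A @ X) = set (take i A) \<union> set X
    \<and> plen (take i A @ X) = i + plen X"
proof -
  have An: "A \<noteq> []" using i by auto
  have Xn: "X \<noteq> []" using X by (auto simp: is_path_iff)
  have tn: "take i A \<noteq> []" using i An by simp
  have pe1: "pe (take i A @ X) = pe (take i A) \<union> pe X \<union> {{last (take i A), A!i}}"
    using tn Xn hX by (simp add: pe_append)
  have pe2: "pe (take (Suc i) A) = pe (take i A) \<union> {{last (take i A), A!i}}"
    using tn i by (simp add: pe_append take_Suc_conv_app_nth)
  have pe3: "pe (take i A @ X) \<subseteq> pe A \<union> pe X"
    using pe1 pe2 pe_take[of "Suc i" A] by blast
  have "is_path V E (take i A @ X)" unfolding is_path_iff
  proof (intro conjI)
    show "take i A @ X \<noteq> []" using tn by simp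
    show "distinct (take i A @ X)" using A X dj by (auto simp: is_path_iff)
    show "set (take i A @ X) \<subseteq> V" using A X by (auto simp: is_path_iff dest: in_set_takeD)
    show "pe (take i A @ X) \<subseteq> E" using pe3 A X by (auto simp: is_path_iff)
  qed
  moreover have "hd (take i A @ X) = hd A" using tn An i by (simp add: hd_append)
  moreover have "plen (take i A @ X) = i + plen X" using i Xn by (cases X) (simp_all add: plen_def)
  ultimately show ?thesis using pe3 Xn by simp
qed

lemma set_len2: "length xs = 2 \<Longrightarrow> set xs = {hd xs, last xs}"
  by (cases xs; cases "tl xs") auto

lemma step:
  assumes A: "is_path V E A" and B: "is_path V E B" and hA: "hd A = u" and hB: "hd B = u"
    and lA: "last A = w" and lB: "last B = w" and int: "set A \<inter> set B = {u,w}"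
    and C: "is_cycle V E M" and uM: "u \<notin> set M" and wM: "w \<in> set M"
    and qM: "q \<in> set M" and qAB: "q \<in> set A \<union> set B" and qw: "q \<noteq> w"
    and lenZ: "plen A + plen B < l" and lenM: "length M < l"
    and long: "\<forall>C. is_cycle V E C \<and> l \<le> length C \<longrightarrow> 2 * l \<le> length C"
  shows "\<exists>A' B'. is_path V E A' \<and> is_path V E B' \<and> hd A' = u \<and> hd B' = u \<and> last A' = hd M \<and> last B' = hd M
     \<and> set A' \<inter> set B' = {u, hd M} \<and> M!1 \<in> set A' \<union> set B' \<and> plen A' + plen B' < l
     \<and> set A' \<union> set B' \<subseteq> set A \<union> set B \<union> set M
     \<and> pe A' \<union> pe B' \<subseteq> pe A \<union> pe B \<union> insert {last M, hd M} (pe M)"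
proof -
  have An: "A \<noteq> []" and Bn: "B \<noteq> []" and dA: "distinct A" and dB: "distinct B"
    using A B by (auto simp: is_path_iff)
  have M3: "3 \<le> length M" and dM: "distinct M" using C by (auto simp: is_cycle_iff)
  obtain i where i: "i < length A" "A!i \<in> set M" "\<forall>k<i. A!k \<notin> set M"
    using first_hit[of A "set M"] lA wM An by blast
  obtain j where j: "j < length B" "B!j \<in> set M" "\<forall>k<j. B!k \<notin> set M"
    using first_hit[of B "set M"] lB wM Bn by blast
  have i0: "0 < i"
  proof (rule ccontr)
    assume "\<not> 0 < i" then have "i = 0" by simp
    then show False using i(2) uM hA An by (simp add: hd_conv_nth)
  qed
  have j0: "0 < j"
  proof (rule ccontr)
    assume "\<not> 0 < j" then have "j = 0" by simp
    then show False using j(2) uM hB Bn by (simp add: hd_conv_nth)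
  qed
  have tA: "set (take i A) \<inter> set M = {}" using i by (auto simp: in_set_conv_nth)
  have tB: "set (take j B) \<inter> set M = {}" using j by (auto simp: in_set_conv_nth)
  define x where "x = A!i"
  define y where "y = B!j"
  have lastA: "A ! (length A - 1) = w" using lA An by (simp add: last_conv_nth)
  have lastB: "B ! (length B - 1) = w" using lB Bn by (simp add: last_conv_nth)
  have iw: "i = length A - 1 \<longleftrightarrow> x = w"
    using nth_eq_iff_index_eq[OF dA i(1), of "length A - 1"] An lastA unfolding x_def by simp
  have jw: "j = length B - 1 \<longleftrightarrow> y = w"
    using nth_eq_iff_index_eq[OF dB j(1), of "length B - 1"] Bn lastB unfolding y_def by simp
  have xy: "x \<noteq> y"
  proof
    assume "x = y"
    then have "x \<in> {u,w}" using int i(1) j(1) unfolding x_def y_def by (metis IntI nth_mem)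
    then have xw: "x = w" using i(2) uM unfolding x_def by auto
    then have yw: "y = w" using \<open>x = y\<close> by simp
    from qAB show False
    proof
      assume "q \<in> set A"
      then obtain k where k: "k < length A" "A!k = q" by (auto simp: in_set_conv_nth)
      have "k \<noteq> length A - 1" using k lastA qw by auto
      then have "k < i" using iw xw k(1) by linarith
      then show False using i(3) k qM by auto
    next
      assume "q \<in> set B"
      then obtain k where k: "k < length B" "B!k = q" by (auto simp: in_set_conv_nth)
      have "k \<noteq> length B - 1" using k lastB qw by auto
      then have "k < j" using jw yw k(1) by linarith
      then show False using j(3) k qM by auto
    qed
  qed
  obtain X Y where XY: "is_path V E X" "is_path V E Y" "hd X = x" "last X = hd M" "hd Y = y"
     "last Y = hd M" "set X \<inter> set Y = {hd M}" "M!1 \<in> set X \<union> set Y"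
     "plen X + plen Y < length M" "set X \<union> set Y \<subseteq> set M"
     "pe X \<union> pe Y \<subseteq> insert {last M, hd M} (pe M)"
    using cyc_split[OF C i(2)[folded x_def] j(2)[folded y_def] xy] by blast
  define A' where "A' = take i A @ X"
  define B' where "B' = take j B @ Y"
  have PA: "is_path V E A' \<and> pe A' \<subseteq> pe A \<union> pe X \<and> hd A' = hd A
    \<and> last A' = last X \<and> set A' = set (take i A) \<union> set X \<and> plen A' = i + plen X"
    unfolding A'_def using prefix_join[OF A i0 i(1) XY(1)] XY(3,10) tA unfolding x_def by blast
  have PB: "is_path V E B' \<and> pe B' \<subseteq> pe B \<union> pe Y \<and> hd B' = hd B
    \<and> last B' = last Y \<and> set B' = set (take j B) \<union> set Y \<and> plen B' = j + plen Y"
    unfolding B'_def using prefix_join[OF B j0 j(1) XY(2)] XY(5,10) tB unfolding y_def by blast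
  have uA': "u \<in> set (take i A)"
  proof -
    have "take i A ! 0 = u" using i0 An hA by (simp add: hd_conv_nth)
    then show ?thesis using i0 i(1) nth_mem[of 0 "take i A"] by simp
  qed
  have uB': "u \<in> set (take j B)"
  proof -
    have "take j B ! 0 = u" using j0 Bn hB by (simp add: hd_conv_nth)
    then show ?thesis using j0 j(1) nth_mem[of 0 "take j B"] by simp
  qed
  have hMX: "hd M \<in> set X" using XY(1,4) last_in_set[of X] by (auto simp: is_path_iff)
  have hMY: "hd M \<in> set Y" using XY(2,6) last_in_set[of Y] by (auto simp: is_path_iff)
  have inter: "set A' \<inter> set B' = {u, hd M}"
  proof -
    have "set (take i A) \<inter> set (take j B) \<subseteq> {u}"
      using int tA tB wM by (auto dest: in_set_takeD)
    then show ?thesis using PA PB tA tB XY(7,10) uA' uB' hMX hMY by auto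
  qed
  have "M \<noteq> []" using M3 by auto
  then have uhM: "u \<noteq> hd M" using uM hd_in_set[of M] by auto
  have M1a: "M!1 \<in> set M" using M3 by (simp add: nth_mem)
  have M1b: "M!1 \<noteq> hd M"
  proof -
    have "1 < length M" "0 < length M" using M3 by auto
    then have "M!1 \<noteq> M!0" using nth_eq_iff_index_eq[OF dM, of 1 0] by simp
    then show ?thesis using \<open>M \<noteq> []\<close> by (simp add: hd_conv_nth)
  qed
  have M1: "M!1 \<in> set M" "M!1 \<noteq> hd M" "M!1 \<noteq> u" using M1a M1b uM by auto
  have ij: "i + j < plen A + plen B"
  proof -
    have "i \<le> plen A" "j \<le> plen B" using i(1) j(1) by (auto simp: plen_def)
    moreover have "\<not> (i = plen A \<and> j = plen B)" using iw jw xy by (auto simp: plen_def)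
    ultimately show ?thesis by linarith
  qed
  have len': "plen A' + plen B' + 2 < 2 * l"
    using PA PB ij XY(9) lenZ lenM by linarith
  have three: "3 \<le> plen A' + plen B'"
  proof (rule ccontr)
    assume "\<not> 3 \<le> plen A' + plen B'"
    have "2 \<le> length A'" using PA two_le_length[of A'] hA XY(4) uhM by (auto simp: is_path_iff)
    moreover have "2 \<le> length B'" using PB two_le_length[of B'] hB XY(6) uhM by (auto simp: is_path_iff)
    ultimately have "length A' = 2" "length B' = 2" using \<open>\<not> 3 \<le> plen A' + plen B'\<close>
      by (auto simp: plen_def)
    then have "set A' \<union> set B' = {u, hd M}" using set_len2[of A'] set_len2[of B'] PA PB hA hB XY(4,6)
      by auto
    moreover have "M!1 \<in> set A' \<union> set B'" using XY(8) PA PB by auto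
    ultimately show False using M1 by auto
  qed
  have RB: "is_path V E (rev B')" using PB by (auto simp: is_path_iff pe_rev)
  have g1: "hd (rev B') = hd M" using PB XY(6) by (simp add: hd_rev)
  have g2: "last (rev B') = u" using PB hB by (simp add: last_rev)
  have g3: "set A' \<inter> set (rev B') = {u, hd M}" using inter by simp
  have g4: "plen (rev B') = plen B'" by (simp add: plen_def)
  have g5: "hd A' = u" "last A' = hd M" using PA hA XY(4) by auto
  have g6: "3 \<le> plen A' + plen (rev B')" using three g4 by simp
  have G: "is_cycle V E (butlast A' @ butlast (rev B')) \<and> length (butlast A' @ butlast (rev B')) = plen A' + plen (rev B')"
    using glue[OF _ RB g5 g1 g2 g3 uhM g6] PA by blast
  have "plen A' + plen B' < l"
  proof (rule ccontr)
    assume "\<not> plen A' + plen B' < l"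
    then have "l \<le> length (butlast A' @ butlast (rev B'))" using G g4 by simp
    then have "2 * l \<le> length (butlast A' @ butlast (rev B'))" using long G by blast
    then have "2 * l \<le> plen A' + plen B'" using G g4 by simp
    then show False using len' by linarith
  qed
  moreover have "M!1 \<in> set A' \<union> set B'" using XY(8) PA PB by auto
  moreover have "set A' \<union> set B' \<subseteq> set A \<union> set B \<union> set M" using PA PB XY(10)
    by (auto dest: in_set_takeD)
  moreover have "pe A' \<union> pe B' \<subseteq> pe A \<union> pe B \<union> insert {last M, hd M} (pe M)"
    using PA PB XY(11) by blast
  moreover have "hd B' = u" "last B' = hd M" using PB hB XY(6) by auto
  moreover have "is_path V E A'" "is_path V E B'" using PA PB by auto
  ultimately show ?thesis using g5 inter by blast
qed



definition QCP where "QCP V E P l Qk s t S Q' M \<longleftrightarrow> is_path V E S \<and> is_path V E Q' \<and> hd S = s \<and> last S = t \<and> hd Q' = s \<and> last Q' = t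
    \<and> set S \<inter> set Q' = {s, t} \<and> plen S + plen Q' < l \<and> pos P s < pos P t \<and> s \<in> set P \<and> t \<in> set P
    \<and> (\<forall>z. z \<in> set S \<longleftrightarrow> z \<in> set P \<and> pos P s \<le> pos P z \<and> pos P z \<le> pos P t)
    \<and> set Q' \<inter> set P \<subseteq> {s, t} \<and> set Q' = set Qk \<and> pe Q' = pe Qk \<and> pe S \<subseteq> pe P
    \<and> is_cycle V E M \<and> length M < l \<and> hd M = t \<and> M!1 = P!(pos P t - 1)
    \<and> set M = set S \<union> set Q' \<and> insert {last M, hd M} (pe M) \<subseteq> pe P \<union> pe Qk"

lemma Qcyc:
  assumes P: "is_path V E P" and HQ: "is_Hpath V E (set P) (path_edges P) Qk"
    and E2k: "(pos P (secondP P Qk) - pos P (firstP P Qk)) + plen Qk < l"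
    and sdef: "s = firstP P Qk" and tdef: "t = secondP P Qk"
  shows "\<exists>S Q' M. QCP V E P l Qk s t S Q' M"
proof -
  have Qp: "is_path V E Qk" and Q2: "2 \<le> length Qk" and hP: "hd Qk \<in> set P" and gP: "last Qk \<in> set P"
    and hg: "hd Qk \<noteq> last Qk" and inn: "inner Qk \<inter> set P = {}"
    and l2: "length Qk = 2 \<longrightarrow> {hd Qk, last Qk} \<notin> path_edges P"
    using HQ unfolding is_Hpath_def by auto
  have dP: "distinct P" using P by (auto simp: is_path_iff)
  define h where "h = hd Qk"
  define g where "g = last Qk"
  have phg: "pos P h \<noteq> pos P g" using pos_inj[of h P g] hP gP hg unfolding h_def g_def by blast
  define Q' where "Q' = (if lessP P h g then Qk else rev Qk)"
  have Q'facts: "hd Q' = s \<and> last Q' = t \<and> pos P s < pos P t \<and> {s,t} = {h,g}"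
  proof (cases "lessP P h g")
    case True then show ?thesis unfolding Q'_def sdef tdef firstP_def secondP_def h_def g_def lessP_def
      by auto
  next
    case False then show ?thesis using phg unfolding Q'_def sdef tdef firstP_def secondP_def h_def g_def lessP_def
      by (auto simp: hd_rev last_rev)
  qed
  have Q'p: "is_path V E Q'" using Qp unfolding Q'_def by (auto simp: is_path_iff pe_rev)
  have sQ: "set Q' = set Qk" unfolding Q'_def by simp
  have peQ: "pe Q' = pe Qk" unfolding Q'_def by (simp add: pe_rev)
  have lQ: "length Q' = length Qk" unfolding Q'_def by simp
  have stP: "s \<in> set P \<and> t \<in> set P"
  proof -
    have "{s,t} \<subseteq> set P" using Q'facts hP gP unfolding h_def g_def by simp
    then show ?thesis by simp
  qed
  then have stP: "s \<in> set P" "t \<in> set P" by auto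
  have setQ: "set Qk = insert h (insert g (inner Qk))"
    using set_len2'[OF Q2] unfolding h_def g_def inner_def by simp
  have QP: "set Q' \<inter> set P \<subseteq> {s, t}" using sQ setQ inn Q'facts by auto
  define ps where "ps = pos P s"
  define pt where "pt = pos P t"
  have ptl: "pt < length P" "P!pt = t" using pos_in[OF stP(2)] unfolding pt_def by auto
  have psl: "P!ps = s" using pos_in[OF stP(1)] unfolding ps_def by auto
  have pst: "ps < pt" using Q'facts unfolding ps_def pt_def by simp
  define S where "S = seg P ps pt"
  have SP: "is_path V E S \<and> hd S = s \<and> last S = t
    \<and> length S = Suc pt - ps \<and> (\<forall>z. z \<in> set S \<longleftrightarrow> (\<exists>k. ps \<le> k \<and> k \<le> pt \<and> z = P!k))
    \<and> pe S \<subseteq> pe P \<and> rev S ! 1 = P!(pt - 1)"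
    using seg_props[OF P _ ptl(1), of ps] pst psl ptl unfolding S_def by auto
  have memS: "\<forall>z. z \<in> set S \<longleftrightarrow> z \<in> set P \<and> ps \<le> pos P z \<and> pos P z \<le> pt"
  proof (intro allI iffI)
    fix z assume "z \<in> set S"
    then obtain k where k: "ps \<le> k" "k \<le> pt" "z = P!k" using SP by blast
    then have "k < length P" using ptl by linarith
    then show "z \<in> set P \<and> ps \<le> pos P z \<and> pos P z \<le> pt" using k pos_nth[OF dP] by (simp add: nth_mem)
  next
    fix z assume "z \<in> set P \<and> ps \<le> pos P z \<and> pos P z \<le> pt"
    then show "z \<in> set S" using SP pos_in[of z P] by metis
  qed
  have sS: "s \<in> set S" "t \<in> set S" using SP by (metis hd_in_set is_path_iff last_in_set)+
  have sQ': "s \<in> set Q'" "t \<in> set Q'" using Q'p Q'facts by (metis hd_in_set is_path_iff last_in_set)+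
  have SQ: "set S \<inter> set Q' = {s, t}"
  proof
    show "set S \<inter> set Q' \<subseteq> {s, t}" using QP memS by blast
    show "{s, t} \<subseteq> set S \<inter> set Q'" using sS sQ' by auto
  qed
  have plS: "plen S = pt - ps" using SP by (simp add: plen_def)
  have plQ: "plen Q' = plen Qk" using lQ by (simp add: plen_def)
  have lenl: "plen S + plen Q' < l" using E2k plS plQ unfolding ps_def pt_def sdef tdef by simp
  have st: "s \<noteq> t" using pst ps_def pt_def by auto
  have three: "3 \<le> plen (rev S) + plen Q'"
  proof (rule ccontr)
    assume a: "\<not> 3 \<le> plen (rev S) + plen Q'"
    have "1 \<le> plen Q'" using Q2 lQ by (simp add: plen_def)
    moreover have "1 \<le> plen S" using plS pst by simp
    moreover have "plen (rev S) = plen S" by (simp add: plen_def)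
    ultimately have "plen S = 1" "plen Q' = 1" using a by linarith+
    then have "pt = Suc ps" "length Qk = 2" using plS pst plQ Q2 by (auto simp: plen_def)
    then have "{hd Qk, last Qk} \<notin> path_edges P" using l2 by simp
    moreover have "{hd Qk, last Qk} = {P!ps, P!Suc ps}" using Q'facts psl ptl \<open>pt = Suc ps\<close>
      unfolding h_def g_def by auto
    moreover have "{P!ps, P!Suc ps} \<in> path_edges P" unfolding path_edges_def
      using ptl \<open>pt = Suc ps\<close> by blast
    ultimately show False by simp
  qed
  have RS: "is_path V E (rev S)" using SP by (auto simp: is_path_iff pe_rev)
  define M where "M = butlast (rev S) @ butlast Q'"
  have G: "is_cycle V E M \<and> length M = plen (rev S) + plen Q'
     \<and> set M = set (rev S) \<union> set Q'
     \<and> insert {last M, hd M} (pe M) \<subseteq> pe (rev S) \<union> pe Q'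
     \<and> hd M = t"
    unfolding M_def
    using glue[OF RS Q'p, of t s] SP Q'facts SQ st three by (auto simp: hd_rev last_rev)
  have M1: "M!1 = P!(pt - 1)"
  proof -
    have "2 \<le> length (rev S)" using SP pst by simp
    moreover have "2 \<le> length Q'" using lQ Q2 by simp
    moreover have "hd Q' = last (rev S)" using SP Q'facts by (simp add: last_rev)
    ultimately show ?thesis unfolding M_def using butlast_app_nth1 SP by metis
  qed
  show ?thesis
    unfolding QCP_def apply (rule exI[of _ S], rule exI[of _ Q'], rule exI[of _ M])
    using SP Q'p Q'facts SQ lenl stP memS QP sQ peQ G M1 lenl unfolding ps_def pt_def
    by (auto simp: pe_rev plen_def)
qed



definition INV where "INV V E u w q l VH EH A B \<longleftrightarrow> is_path V E A \<and> is_path V E B \<and> hd A = u \<and> hd B = u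
     \<and> last A = w \<and> last B = w \<and> set A \<inter> set B = {u, w} \<and> q \<in> set A \<union> set B
     \<and> plen A + plen B < l \<and> set A \<union> set B \<subseteq> VH \<and> pe A \<union> pe B \<subseteq> EH"

theorem lemma4:
  fixes V :: "'a set" and E :: "'a set set" and P :: "'a list" and Q :: "nat \<Rightarrow> 'a list"
    and l r :: nat and u v :: 'a
  assumes "0 < l"
    and "graph V E"
    and "is_path V E P" and "hd P = u" and "last P = v"
    and "1 \<le> r"
    and Qpaths: "\<forall>i\<in>{1..r}. is_Hpath V E (set P) (path_edges P) (Q i)"
    and E1': "\<forall>i\<in>{1..r}. \<forall>j\<in>{1..r}. (i + 1 < j \<or> j + 1 < i) \<longrightarrow> int_disjoint (Q i) (Q j)"
    and E2: "\<forall>i\<in>{1..r}.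
       (pos P (secondP P (Q i)) - pos P (firstP P (Q i))) + plen (Q i) < l"
    and E3: "firstP P (Q 1) = u" "secondP P (Q r) = v"
    and E4: "\<forall>i\<in>{1..r-1}.
       lessP P (firstP P (Q i)) (firstP P (Q (i+1))) \<and>
       lessP P (firstP P (Q (i+1))) (secondP P (Q i)) \<and>
       lessP P (secondP P (Q i)) (secondP P (Q (i+1)))"
    and long: "\<forall>C. is_cycle V E C \<and> l \<le> length C \<longrightarrow> 2 * l \<le> length C"
  shows "\<exists>R. is_path V E R \<and> hd R = u \<and> last R = v \<and> plen R < l \<and>
     set R \<subseteq> set P \<union> (\<Union>j\<in>{1..r}. set (Q j)) \<and>
     path_edges R \<subseteq> path_edges P \<union> (\<Union>j\<in>{1..r}. path_edges (Q j))"
proof -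
  note P = assms(3)
  define s where "s k = firstP P (Q k)" for k
  define t where "t k = secondP P (Q k)" for k
  define VH where "VH = set P \<union> (\<Union>j\<in>{1..r}. set (Q j))"
  define EH where "EH = pe P \<union> (\<Union>j\<in>{1..r}. pe (Q j))"
  have dP: "distinct P" and Pn: "P \<noteq> []" using P by (auto simp: is_path_iff)
  have u0: "P!0 = u" using Pn assms(4) by (simp add: hd_conv_nth)
  have posu: "pos P u = 0" using pos_nth[OF dP, of 0] Pn u0 by simp
  have QC: "\<exists>S Q' M. QCP V E P l (Q k) (s k) (t k) S Q' M"
    if "k \<in> {1..r}" for k
    using Qcyc[OF P, of "Q k" l "s k" "t k"] Qpaths E2 that unfolding s_def t_def by blast
  have qfacts: "P!(pos P (t k) - 1) \<in> set P \<and> pos P (P!(pos P (t k) - 1)) = pos P (t k) - 1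
     \<and> P!(pos P (t k) - 1) \<noteq> t k"
    if "t k \<in> set P" "0 < pos P (t k)" for k
  proof -
    have "pos P (t k) < length P" using pos_in[OF that(1)] by simp
    then have lt: "pos P (t k) - 1 < length P" by simp
    then have "pos P (P!(pos P (t k) - 1)) = pos P (t k) - 1" using pos_nth[OF dP] by simp
    then show ?thesis using lt that(2) by (auto simp: nth_mem)
  qed
  define Inv where "Inv k \<longleftrightarrow> (\<exists>A B. INV V E u (t k) (P!(pos P (t k) - 1)) l VH EH A B)" for k
  have base: "Inv 1"
  proof -
    have k1: "1 \<in> {1..r}" using assms(6) by simp
    obtain S Q' M where H0: "QCP V E P l (Q 1) (s 1) (t 1) S Q' M" using QC[OF k1] by blast
    have Hs: "is_path V E S" "is_path V E Q'" "hd S = s 1" "last S = t 1" "hd Q' = s 1" "last Q' = t 1"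
      "set S \<inter> set Q' = {s 1, t 1}" "plen S + plen Q' < l" "pos P (s 1) < pos P (t 1)" "t 1 \<in> set P"
      "\<forall>z. z \<in> set S \<longleftrightarrow> z \<in> set P \<and> pos P (s 1) \<le> pos P z \<and> pos P z \<le> pos P (t 1)"
      "set Q' = set (Q 1)" "pe Q' = pe (Q 1)" "pe S \<subseteq> pe P"
      using H0 unfolding QCP_def by auto
    have su: "s 1 = u" using E3 unfolding s_def by simp
    have qf: "P!(pos P (t 1) - 1) \<in> set P \<and> pos P (P!(pos P (t 1) - 1)) = pos P (t 1) - 1"
      using qfacts[of 1] Hs(9,10) by simp
    have q: "P!(pos P (t 1) - 1) \<in> set S" using qf Hs(9,11) by simp
    have "set S \<subseteq> set P" using Hs(11) by blast
    then have "set S \<union> set Q' \<subseteq> VH" using Hs(12) k1 unfolding VH_def by blast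
    moreover have "pe S \<union> pe Q' \<subseteq> EH" using Hs(13,14) k1 unfolding EH_def by blast
    moreover have "set S \<inter> set Q' = {u, t 1}" using Hs(7) su by simp
    moreover have "P!(pos P (t 1) - 1) \<in> set S \<union> set Q'" using q by simp
    ultimately have "INV V E u (t 1) (P!(pos P (t 1) - 1)) l VH EH S Q'" unfolding INV_def using Hs(1-6,8) su
      by simp
    then show ?thesis unfolding Inv_def by blast
  qed
  have stepk: "Inv (Suc k)" if IH: "Inv k" and k: "1 \<le> k" "k < r" for k
  proof -
    obtain A B where AB: "is_path V E A" "is_path V E B" "hd A = u" "hd B = u"
     "last A = t k" "last B = t k" "set A \<inter> set B = {u, t k}" "P!(pos P (t k) - 1) \<in> set A \<union> set B"
     "plen A + plen B < l" "set A \<union> set B \<subseteq> VH" "pe A \<union> pe B \<subseteq> EH"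
      using IH unfolding Inv_def INV_def by (elim exE conjE) (rule that; assumption)
    have kr: "k \<in> {1..r}" "Suc k \<in> {1..r}" using k by auto
    have e4: "pos P (s k) < pos P (s (Suc k))" "pos P (s (Suc k)) < pos P (t k)"
      "pos P (t k) < pos P (t (Suc k))"
      using E4 k unfolding s_def t_def lessP_def by auto
    obtain S2 Q2 M2 where H2: "QCP V E P l (Q k) (s k) (t k) S2 Q2 M2" using QC[OF kr(1)] by blast
    have H0: "t k \<in> set P" using H2 unfolding QCP_def by (elim conjE)
    obtain S Q' M where H1: "QCP V E P l (Q (Suc k)) (s (Suc k)) (t (Suc k)) S Q' M" using QC[OF kr(2)] by blast
    have hM: "set M = set S \<union> set Q'" using H1 unfolding QCP_def by (elim conjE)
    have hS: "\<forall>z. z \<in> set S \<longleftrightarrow> z \<in> set P \<and> pos P (s (Suc k)) \<le> pos P z \<and> pos P z \<le> pos P (t (Suc k))" using H1 unfolding QCP_def by (elim conjE)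
    have hQP: "set Q' \<inter> set P \<subseteq> {s (Suc k), t (Suc k)}" using H1 unfolding QCP_def by (elim conjE)
    have hQ: "set Q' = set (Q (Suc k))" using H1 unfolding QCP_def by (elim conjE)
    have hC: "is_cycle V E M" using H1 unfolding QCP_def by (elim conjE)
    have hL: "length M < l" using H1 unfolding QCP_def by (elim conjE)
    have hH: "hd M = t (Suc k)" using H1 unfolding QCP_def by (elim conjE)
    have h1: "M!1 = P!(pos P (t (Suc k)) - 1)" using H1 unfolding QCP_def by (elim conjE)
    have hE: "insert {last M, hd M} (pe M) \<subseteq> pe P \<union> pe (Q (Suc k))" using H1 unfolding QCP_def by (elim conjE)
    have hst: "pos P (s (Suc k)) < pos P (t (Suc k))" using H1 unfolding QCP_def by (elim conjE)
    have uP: "u \<in> set P" using Pn assms(4) by auto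
    have uS: "u \<notin> set S" using hS posu e4 by auto
    have uQ: "u \<notin> set Q'"
    proof
      assume "u \<in> set Q'"
      then have "u \<in> {s (Suc k), t (Suc k)}" using hQP uP by blast
      then show False using posu e4 hst by auto
    qed
    have uM: "u \<notin> set M" using uS uQ hM by simp
    have tM: "t k \<in> set M" using hM hS H0 e4 by simp
    have q: "P!(pos P (t k) - 1) \<in> set P" "pos P (P!(pos P (t k) - 1)) = pos P (t k) - 1"
      "P!(pos P (t k) - 1) \<noteq> t k" using qfacts[OF H0] e4 by auto
    have "pos P (s (Suc k)) \<le> pos P (t k) - 1 \<and> pos P (t k) - 1 \<le> pos P (t (Suc k))" using e4 by linarith
    then have qM: "P!(pos P (t k) - 1) \<in> set M" using hM hS q by simp
    obtain A' B' where R: "is_path V E A'" "is_path V E B'" "hd A' = u" "hd B' = u" "last A' = hd M" "last B' = hd M"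
     "set A' \<inter> set B' = {u, hd M}" "M!1 \<in> set A' \<union> set B'" "plen A' + plen B' < l"
     "set A' \<union> set B' \<subseteq> set A \<union> set B \<union> set M"
     "pe A' \<union> pe B' \<subseteq> pe A \<union> pe B \<union> insert {last M, hd M} (pe M)"
    proof -
      from step[OF AB(1-7) hC uM tM qM AB(8) q(3) AB(9) hL long]
      show ?thesis by (elim exE conjE) (rule that; assumption)
    qed
    have "set S \<subseteq> set P" using hS by blast
    then have "set M \<subseteq> VH" using hM hQ kr(2) unfolding VH_def by blast
    then have "set A' \<union> set B' \<subseteq> VH" using R(10) AB(10) by blast
    moreover have "insert {last M, hd M} (pe M) \<subseteq> EH" using hE kr(2) unfolding EH_def by blast
    then have "pe A' \<union> pe B' \<subseteq> EH" using R(11) AB(11) by blast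
    moreover have "P!(pos P (t (Suc k)) - 1) \<in> set A' \<union> set B'" using R(8) h1 by simp
    ultimately have "INV V E u (t (Suc k)) (P!(pos P (t (Suc k)) - 1)) l VH EH A' B'"
      unfolding INV_def using R(1-7,9) hH by simp
    then show ?thesis unfolding Inv_def by blast
  qed
  have all: "1 \<le> k \<longrightarrow> k \<le> r \<longrightarrow> Inv k" for k
  proof (induction k)
    case 0 then show ?case by simp
  next
    case (Suc k) then show ?case using base stepk by (cases "k = 0") auto
  qed
  have "Inv r" using all[of r] assms(6) by simp
  then obtain A B where AB: "is_path V E A" "hd A = u" "last A = t r" "plen A + plen B < l"
     "set A \<union> set B \<subseteq> VH" "pe A \<union> pe B \<subseteq> EH"
    unfolding Inv_def INV_def by (elim exE conjE) (rule that; assumption)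
  have "t r = v" using E3 unfolding t_def by simp
  moreover have "path_edges A \<subseteq> path_edges P \<union> (\<Union>j\<in>{1..r}. path_edges (Q j))"
    using AB(6) unfolding EH_def path_edges_pe by blast
  ultimately show ?thesis using AB unfolding VH_def
    by (intro exI[of _ A]) auto
qed


end
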